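(* Let $X$ be a CAT(0) space, $C\subseteq X$ a totally bounded subset with II-modulus of total boundedness $\gamma$ and $b>0$ an upper bound on the diameter of $C$, $\lambda\in(0,1)$, and $T:C\to C$ a $\lambda$-firmly nonexpansive mapping with $\mathrm{Fix}(T)\ne\emptyset$. Let $x\in C$ and $x_n:=T^nx$. Then for all $k\in\mathbb{N}$ and $g:\mathbb{N}\to\mathbb{N}$ there exists $N\le\Theta_0(\gamma^M(4k+3))+K$ such that for all $i,j\in[N,N+g(N)]$ and all $m\ge N$: $d(x_i,x_j)\le\frac1{k+1}$ and $d(x_m,Tx_m)\le\frac1{k+1}$. Here $c=\left\lceil\frac{8(b+1)^2}{\lambda(1-\lambda)}\right\rceil$, $K=c(k+1)^2$, $\Theta_0(0)=0$ and $\Theta_0(n+1)=c\big((g^M(\Theta_0(n)+K)+K)(4k+4)\big)^2$.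
   Context: In a CAT(0) space, $(1-\lambda)x+\lambda y$ denotes the point on the geodesic segment from $x$ to $y$ at distance $\lambda d(x,y)$ from $x$. $T:C\to C$ is $\lambda$-firmly nonexpansive if $d(Tx,Ty)\le d((1-\lambda)x+\lambda Tx,(1-\lambda)y+\lambda Ty)\le d(x,y)$ for all $x,y\in C$. II-modulus $\gamma$ for $C$: for every $k$ and every sequence $(y_n)$ in $C$ there are $0\le i<j\le\gamma(k)$ with $d(y_i,y_j)\le\frac1{k+1}$. For $f:\mathbb{N}\to\mathbb{N}$, $f^M(n):=\max\{f(i)\mid i\le n\}$. *)

theory Defs
  imports "HOL-Analysis.Analysis"
begin

definition geodesic_path :: "'a::metric_space \<Rightarrow> 'a \<Rightarrow> (real \<Rightarrow> 'a) \<Rightarrow> bool" where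
  "geodesic_path x y g \<longleftrightarrow> g 0 = x \<and> g 1 = y \<and>
     (\<forall>s\<in>{0..1}. \<forall>t\<in>{0..1}. dist (g s) (g t) = \<bar>s - t\<bar> * dist x y)"

text \<open>CAT(0) space: a geodesic space in which every point on a side of a geodesic triangle
  is at distance from the opposite vertex at most the corresponding Euclidean comparison distance.\<close>
definition CAT0 :: "'a::metric_space set \<Rightarrow> bool" where
  "CAT0 X \<longleftrightarrow>
     (\<forall>x\<in>X. \<forall>y\<in>X. \<exists>g. geodesic_path x y g \<and> g ` {0..1} \<subseteq> X) \<and>
     (\<forall>x\<in>X. \<forall>y\<in>X. \<forall>z\<in>X. \<forall>g. geodesic_path y z g \<and> g ` {0..1} \<subseteq> X \<longrightarrow>
        (\<forall>t\<in>{0..1}. (dist x (g t))\<^sup>2 \<le>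
           (1 - t) * (dist x y)\<^sup>2 + t * (dist x z)\<^sup>2 - t * (1 - t) * (dist y z)\<^sup>2))"

text \<open>(1-t)x + t y: the point on the (unique) geodesic segment in X from x to y
  at distance t * d(x,y) from x.\<close>
definition geo :: "'a::metric_space set \<Rightarrow> 'a \<Rightarrow> 'a \<Rightarrow> real \<Rightarrow> 'a" where
  "geo X x y t = (THE p. \<exists>g. geodesic_path x y g \<and> g ` {0..1} \<subseteq> X \<and> g t = p)"

definition firmly_nonexp :: "'a::metric_space set \<Rightarrow> real \<Rightarrow> 'a set \<Rightarrow> ('a \<Rightarrow> 'a) \<Rightarrow> bool" where
  "firmly_nonexp X lam C T \<longleftrightarrow> (\<forall>x\<in>C. \<forall>y\<in>C.
     dist (T x) (T y) \<le> dist (geo X x (T x) lam) (geo X y (T y) lam) \<and>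
     dist (geo X x (T x) lam) (geo X y (T y) lam) \<le> dist x y)"

definition II_modulus :: "'a::metric_space set \<Rightarrow> (nat \<Rightarrow> nat) \<Rightarrow> bool" where
  "II_modulus C \<gamma> \<longleftrightarrow> (\<forall>k. \<forall>y::nat \<Rightarrow> 'a. (\<forall>n. y n \<in> C) \<longrightarrow>
     (\<exists>i j. i < j \<and> j \<le> \<gamma> k \<and> dist (y i) (y j) \<le> 1 / (real k + 1)))"

definition maxf :: "(nat \<Rightarrow> nat) \<Rightarrow> nat \<Rightarrow> nat" where
  "maxf f n = Max (f ` {..n})"

primrec Theta0 :: "nat \<Rightarrow> nat \<Rightarrow> (nat \<Rightarrow> nat) \<Rightarrow> nat \<Rightarrow> nat \<Rightarrow> nat" where
  "Theta0 c K g k 0 = 0"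
| "Theta0 c K g k (Suc n) = c * ((maxf g (Theta0 c K g k n + K) + K) * (4 * k + 4))\<^sup>2"

end

theory Submission
  imports Defs
begin

lemma CAT0_geod:
  assumes "CAT0 X" "x \<in> X" "y \<in> X"
  obtains g where "geodesic_path x y g" "g ` {0..1} \<subseteq> X"
  using assms unfolding CAT0_def by meson

lemma CAT0_cn:
  assumes "CAT0 X" "x \<in> X" "y \<in> X" "z \<in> X" "geodesic_path y z g" "g ` {0..1} \<subseteq> X" "t \<in> {0..1}"
  shows "(dist x (g t))\<^sup>2 \<le> (1 - t) * (dist x y)\<^sup>2 + t * (dist x z)\<^sup>2 - t * (1 - t) * (dist y z)\<^sup>2"
proof -
  have "\<forall>x\<in>X. \<forall>y\<in>X. \<forall>z\<in>X. \<forall>g. geodesic_path y z g \<and> g ` {0..1} \<subseteq> X \<longrightarrow>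
        (\<forall>t\<in>{0..1}. (dist x (g t))\<^sup>2 \<le>
           (1 - t) * (dist x y)\<^sup>2 + t * (dist x z)\<^sup>2 - t * (1 - t) * (dist y z)\<^sup>2)"
    using assms(1) unfolding CAT0_def by (rule conjunct2)
  then show ?thesis using assms(2-) by blast
qed

lemma geo_unique:
  assumes cat: "CAT0 X" and g: "geodesic_path x y g" "g ` {0..1} \<subseteq> X"
    and xy: "x \<in> X" "y \<in> X" and t: "t \<in> {0..1}"
  shows "geo X x y t = g t"
  unfolding geo_def
proof (rule the_equality)
  show "\<exists>g'. geodesic_path x y g' \<and> g' ` {0..1} \<subseteq> X \<and> g' t = g t" using g by blast
next
  fix p assume "\<exists>g'. geodesic_path x y g' \<and> g' ` {0..1} \<subseteq> X \<and> g' t = p"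
  then obtain g' where g': "geodesic_path x y g'" "g' ` {0..1} \<subseteq> X" "g' t = p" by blast
  have pX: "g' t \<in> X" using g' t by auto
  have cn: "(dist (g' t) (g t))\<^sup>2 \<le> (1 - t) * (dist (g' t) x)\<^sup>2 + t * (dist (g' t) y)\<^sup>2 - t * (1 - t) * (dist x y)\<^sup>2"
    using CAT0_cn[OF cat pX xy g t] .
  have d1: "dist (g' t) x = t * dist x y"
  proof -
    have gp: "g' 0 = x" "\<forall>s\<in>{0..1}. \<forall>r\<in>{0..1}. dist (g' s) (g' r) = \<bar>s - r\<bar> * dist x y"
      using g'(1) unfolding geodesic_path_def by auto
    have "dist (g' t) (g' 0) = \<bar>t - 0\<bar> * dist x y" using gp(2) t by simp
    then show ?thesis using gp(1) t by simp
  qed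
  have d2: "dist (g' t) y = (1 - t) * dist x y"
  proof -
    have gp: "g' 1 = y" "\<forall>s\<in>{0..1}. \<forall>r\<in>{0..1}. dist (g' s) (g' r) = \<bar>s - r\<bar> * dist x y"
      using g'(1) unfolding geodesic_path_def by auto
    have "dist (g' t) (g' 1) = \<bar>t - 1\<bar> * dist x y" using gp(2) t by simp
    moreover have "\<bar>t - 1\<bar> = 1 - t" using t by auto
    ultimately show ?thesis using gp(1) by simp
  qed
  have "(1 - t) * (t * dist x y)\<^sup>2 + t * ((1 - t) * dist x y)\<^sup>2 - t * (1 - t) * (dist x y)\<^sup>2 = 0"
    by (simp add: power2_eq_square algebra_simps)
  then have "(dist (g' t) (g t))\<^sup>2 \<le> 0" using cn d1 d2 by simp
  then show "p = g t" using g'(3) by simp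
qed

lemma fejer:
  assumes cat: "CAT0 X" and CX: "C \<subseteq> X" and lam: "0 < lam" "lam < 1"
    and fn: "firmly_nonexp X lam C T" and p: "p \<in> C" "T p = p" and u: "u \<in> C" "T u \<in> C"
  shows "(dist (T u) p)\<^sup>2 \<le> (dist u p)\<^sup>2 - lam * (dist u (T u))\<^sup>2"
proof -
  have uX: "u \<in> X" "T u \<in> X" "p \<in> X" using u p CX by auto
  obtain g where g: "geodesic_path u (T u) g" "g ` {0..1} \<subseteq> X" using CAT0_geod[OF cat uX(1,2)] .
  obtain g0 where g0: "geodesic_path p p g0" "g0 ` {0..1} \<subseteq> X" using CAT0_geod[OF cat uX(3,3)] .
  have lam01: "lam \<in> {0..1}" using lam by auto
  have w: "geo X u (T u) lam = g lam" using geo_unique[OF cat g uX(1,2) lam01] .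
  have "geo X p p lam = g0 lam" using geo_unique[OF cat g0 uX(3,3) lam01] .
  also have "g0 lam = p"
  proof -
    have gp: "g0 0 = p" "\<forall>s\<in>{0..1}. \<forall>r\<in>{0..1}. dist (g0 s) (g0 r) = \<bar>s - r\<bar> * dist p p"
      using g0(1) unfolding geodesic_path_def by blast+
    have "dist (g0 lam) (g0 0) = \<bar>lam - 0\<bar> * dist p p" using bspec[OF bspec[OF gp(2) lam01], of 0] by simp
    then show ?thesis using gp(1) by simp
  qed
  finally have w0: "geo X p (T p) lam = p" using p by simp
  have fnx: "\<And>a c. a \<in> C \<Longrightarrow> c \<in> C \<Longrightarrow> dist (T a) (T c) \<le> dist (geo X a (T a) lam) (geo X c (T c) lam)"
    using fn unfolding firmly_nonexp_def by blast
  have "dist (T u) (T p) \<le> dist (geo X u (T u) lam) (geo X p (T p) lam)"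
    using fnx u p by blast
  then have e: "dist (T u) p \<le> dist (g lam) p" using w w0 p by simp
  have e2: "(dist (T u) p)\<^sup>2 \<le> (dist (g lam) p)\<^sup>2" using e zero_le_dist by (rule power_mono)
  have cn: "(dist p (g lam))\<^sup>2 \<le> (1 - lam) * (dist p u)\<^sup>2 + lam * (dist p (T u))\<^sup>2 - lam * (1 - lam) * (dist u (T u))\<^sup>2"
    using CAT0_cn[OF cat uX(3) uX(1,2) g lam01] .
  have dc: "dist p (g lam) = dist (g lam) p" "dist p u = dist u p" "dist p (T u) = dist (T u) p"
    by (simp_all add: dist_commute)
  define E where "E = (dist (T u) p)\<^sup>2"
  define A where "A = (dist u p)\<^sup>2"
  define F where "F = (dist u (T u))\<^sup>2"
  define W where "W = (dist (g lam) p)\<^sup>2"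
  have h1: "E \<le> W" using e2 unfolding E_def W_def .
  have h2: "W \<le> (1 - lam) * A + lam * E - lam * (1 - lam) * F" using cn unfolding dc E_def A_def F_def W_def .
  have eq: "(1 - lam) * (E - A + lam * F) = E - ((1 - lam) * A + lam * E - lam * (1 - lam) * F)"
    by (simp add: algebra_simps)
  have "(1 - lam) * (E - A + lam * F) \<le> 0" unfolding eq using h1 h2 by linarith
  then have "E - A + lam * F \<le> 0"
    using lam by (simp add: mult_le_0_iff)
  then show ?thesis unfolding E_def A_def F_def by simp
qed




lemma maxf_ge: "f n \<le> maxf f n"
  unfolding maxf_def by (rule Max_ge) auto

lemma maxf_mono: "a \<le> a' \<Longrightarrow> maxf f a \<le> maxf f a'"
  unfolding maxf_def by (rule Max_mono) auto

lemma Theta0_mono: "i \<le> j \<Longrightarrow> Theta0 c K g k i \<le> Theta0 c K g k j"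
proof -
  have "Theta0 c K g k n \<le> Theta0 c K g k (Suc n)" for n
  proof (induction n)
    case 0 then show ?case by simp
  next
    case (Suc n)
    have "maxf g (Theta0 c K g k n + K) \<le> maxf g (Theta0 c K g k (Suc n) + K)"
      using Suc by (intro maxf_mono) simp
    then show ?case by (simp only: Theta0.simps) (intro mult_le_mono2 power_mono mult_le_mono1 add_le_mono1, auto)
  qed
  then show "i \<le> j \<Longrightarrow> Theta0 c K g k i \<le> Theta0 c K g k j" by (rule lift_Suc_mono_le)
qed

lemma main:
  fixes X C :: "'a::metric_space set" and \<gamma> g :: "nat \<Rightarrow> nat" and b lam :: real
    and T :: "'a \<Rightarrow> 'a" and x :: 'a and k c K :: nat
  assumes cat: "CAT0 X" and CX: "C \<subseteq> X"
    and II: "II_modulus C \<gamma>"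
    and bpos: "b > 0" and bC: "\<forall>u\<in>C. \<forall>v\<in>C. dist u v \<le> b"
    and lam: "0 < lam" "lam < 1"
    and TC: "T ` C \<subseteq> C" and fn: "firmly_nonexp X lam C T"
    and fixp: "\<exists>p\<in>C. T p = p"
    and xC: "x \<in> C"
    and cge: "8 * (b + 1)\<^sup>2 / (lam * (1 - lam)) \<le> real c"
    and Kdef: "K = c * (k + 1)\<^sup>2"
  shows "\<exists>N \<le> Theta0 c K g k (maxf \<gamma> (4 * k + 3)) + K.
              (\<forall>i\<in>{N..N + g N}. \<forall>j\<in>{N..N + g N}. dist ((T ^^ i) x) ((T ^^ j) x) \<le> 1 / (real k + 1)) \<and>
              (\<forall>m\<ge>N. dist ((T ^^ m) x) (T ((T ^^ m) x)) \<le> 1 / (real k + 1))"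
proof -
  obtain p where p: "p \<in> C" "T p = p" using fixp by blast
  define xs where "xs n = (T ^^ n) x" for n
  have xsS: "xs (Suc n) = T (xs n)" for n unfolding xs_def by simp
  have xsC: "xs n \<in> C" for n
  proof (induction n)
    case 0 then show ?case using xC unfolding xs_def by simp
  next
    case (Suc n) then show ?case unfolding xsS using TC by blast
  qed
  have nexp: "dist (T u) (T v) \<le> dist u v" if "u \<in> C" "v \<in> C" for u v
    using fn that unfolding firmly_nonexp_def by (meson order_trans)
  define dd where "dd l = dist (xs l) (xs (Suc l))" for l
  have dd_nn: "0 \<le> dd l" for l unfolding dd_def by simp
  have "decseq dd"
  proof (rule decseq_SucI)
    fix l show "dd (Suc l) \<le> dd l"
      unfolding dd_def xsS[of "Suc l"] xsS[of l] using nexp[OF xsC[of l] xsC[of "Suc l"]]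
      by (simp add: xsS)
  qed
  then have dd_dec: "l \<le> m \<Longrightarrow> dd m \<le> dd l" for l m by (simp add: decseqD)
  have fej: "(dist (xs (Suc n)) p)\<^sup>2 \<le> (dist (xs n) p)\<^sup>2 - lam * (dd n)\<^sup>2" for n
  proof -
    have "T (xs n) \<in> C" using TC xsC by blast
    from fejer[OF cat CX lam fn p xsC[of n] this]
    show ?thesis unfolding dd_def xsS .
  qed
  have sumb: "(dist (xs n) p)\<^sup>2 + lam * (\<Sum>l<n. (dd l)\<^sup>2) \<le> (dist (xs 0) p)\<^sup>2" for n
  proof (induction n)
    case 0 then show ?case by simp
  next
    case (Suc n)
    have "lam * (\<Sum>l<Suc n. (dd l)\<^sup>2) = lam * (\<Sum>l<n. (dd l)\<^sup>2) + lam * (dd n)\<^sup>2"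
      by (simp add: algebra_simps)
    then show ?case using Suc fej[of n] by linarith
  qed
  have b2: "(dist (xs 0) p)\<^sup>2 \<le> b\<^sup>2"
    using bC xsC[of 0] p(1) by (intro power_mono) auto
  have bnd: "lam * real n * (dd n)\<^sup>2 \<le> b\<^sup>2" for n
  proof -
    have "(\<Sum>l<n. (dd n)\<^sup>2) \<le> (\<Sum>l<n. (dd l)\<^sup>2)"
      by (rule sum_mono) (intro power_mono dd_dec dd_nn, simp_all)
    then have "real n * (dd n)\<^sup>2 \<le> (\<Sum>l<n. (dd l)\<^sup>2)" by simp
    then have "lam * (real n * (dd n)\<^sup>2) \<le> lam * (\<Sum>l<n. (dd l)\<^sup>2)"
      using lam by (intro mult_left_mono) auto
    moreover have "0 \<le> (dist (xs n) p)\<^sup>2" by simp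
    moreover have "lam * real n * (dd n)\<^sup>2 = lam * (real n * (dd n)\<^sup>2)" by simp
    ultimately show ?thesis using sumb[of n] b2 by linarith
  qed
  have lampos: "0 < lam * (1 - lam)" using lam by simp
  have c1: "8 * (b + 1)\<^sup>2 \<le> real c * (lam * (1 - lam))"
    using cge lampos by (simp add: divide_le_eq)
  have c2: "real c * (lam * (1 - lam)) \<le> real c * lam"
    using lam by (intro mult_left_mono) auto
  have b1: "b\<^sup>2 \<le> 8 * (b + 1)\<^sup>2" "8 \<le> 8 * (b + 1)\<^sup>2" using bpos by (simp_all add: power2_eq_square algebra_simps)
  have clam: "b\<^sup>2 \<le> real c * lam" using b1 c1 c2 by linarith
  have "real c * lam \<le> real c" using lam by (intro mult_left_le) auto
  then have c8: "8 \<le> real c" using b1 c1 c2 by linarith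
  have rate: "dd m \<le> 1 / R" if R: "R > 0" "real c * R\<^sup>2 \<le> real m" for m R
  proof -
    have "0 < real c * R\<^sup>2" using c8 R by simp
    have "lam * (real c * R\<^sup>2) \<le> lam * real m" using R lam by (intro mult_left_mono) auto
    then have "(dd m)\<^sup>2 * (lam * (real c * R\<^sup>2)) \<le> (dd m)\<^sup>2 * (lam * real m)"
      by (rule mult_left_mono[OF _ zero_le_power2])
    also have "\<dots> \<le> b\<^sup>2" using bnd[of m] by (simp add: algebra_simps)
    also have "\<dots> \<le> 1 * (real c * lam)" using clam by simp
    finally have "(dd m * R)\<^sup>2 * (real c * lam) \<le> 1 * (real c * lam)"
      by (simp add: power_mult_distrib algebra_simps)
    moreover have "0 < real c * lam" using c8 lam by simp
    ultimately have "(dd m * R)\<^sup>2 \<le> 1" by (simp only: mult_le_cancel_right_pos)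
    then have "(dd m * R)\<^sup>2 \<le> 1\<^sup>2" by simp
    then have "dd m * R \<le> 1"
      by (rule power2_le_imp_le) simp
    then show ?thesis using R(1) by (simp add: le_divide_eq)
  qed
  let ?Th = "Theta0 c K g k"
  define y where "y n = xs (?Th n + K)" for n
  obtain i j where ij: "i < j" "j \<le> \<gamma> (4 * k + 3)" "dist (y i) (y j) \<le> 1 / (real (4 * k + 3) + 1)"
  proof -
    have A: "\<forall>yy::nat \<Rightarrow> 'a. (\<forall>n. yy n \<in> C) \<longrightarrow>
     (\<exists>i j. i < j \<and> j \<le> \<gamma> (4 * k + 3) \<and> dist (yy i) (yy j) \<le> 1 / (real (4 * k + 3) + 1))"
      using II unfolding II_modulus_def by blast
    have B: "\<forall>n. y n \<in> C" unfolding y_def using xsC by blast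
    have "\<exists>i j. i < j \<and> j \<le> \<gamma> (4 * k + 3) \<and> dist (y i) (y j) \<le> 1 / (real (4 * k + 3) + 1)"
      by (rule mp[OF spec[OF A, of y] B])
    then show ?thesis using that by blast
  qed
  define N where "N = ?Th i + K"
  define M where "M = ?Th j + K"
  define G where "G = maxf g N"
  define R where "R = real ((G + K) * (4 * k + 4))"
  have "1 \<le> c" using c8 by linarith
  then have K1: "1 \<le> K" unfolding Kdef by simp
  have Rpos: "R > 0" unfolding R_def using K1 by simp
  have "?Th (Suc i) \<le> ?Th j" using ij by (intro Theta0_mono) simp
  then have "?Th (Suc i) \<le> M" unfolding M_def by simp
  moreover have "real (?Th (Suc i)) = real c * R\<^sup>2"
    unfolding R_def G_def N_def Theta0.simps of_nat_mult of_nat_power by simp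
  ultimately have "real c * R\<^sup>2 \<le> real M" by (metis of_nat_le_iff)
  then have zT: "dd M \<le> 1 / R" using rate Rpos by blast
  define z where "z = xs M"
  have zC: "z \<in> C" unfolding z_def by (rule xsC)
  have dz: "dist z (T z) \<le> 1 / R" using zT unfolding dd_def z_def xsS .
  have drift: "dist (xs (N + s)) z \<le> dist (xs N) z + real s / R" for s
  proof (induction s)
    case 0 then show ?case by simp
  next
    case (Suc s)
    have "dist (xs (N + Suc s)) z \<le> dist (T (xs (N + s))) (T z) + dist (T z) z"
      using dist_triangle by (simp add: xsS)
    also have "\<dots> \<le> dist (xs (N + s)) z + 1 / R"
      using nexp[OF xsC zC] dz by (simp add: dist_commute add_mono)
    also have "\<dots> \<le> dist (xs N) z + real (Suc s) / R"
      using Suc by (simp add: add_divide_distrib)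
    finally show ?case .
  qed
  have dNz: "dist (xs N) z \<le> 1 / (4 * real k + 4)"
    using ij(3) unfolding y_def N_def z_def M_def by (simp add: algebra_simps)
  have win: "dist (xs t) z \<le> 2 / (4 * real k + 4)" if "t \<in> {N..N + g N}" for t
  proof -
    define s where "s = t - N"
    have t: "t = N + s" "s \<le> g N" using that unfolding s_def by auto
    have "s \<le> G" unfolding G_def using t(2) maxf_ge[of g N] by linarith
    then have "s * (4 * k + 4) \<le> (G + K) * (4 * k + 4)" by simp
    then have "real (s * (4 * k + 4)) \<le> R" unfolding R_def by (simp only: of_nat_le_iff)
    then have "real s * (4 * real k + 4) \<le> R" by simp
    then have "real s / R \<le> 1 / (4 * real k + 4)"
      using Rpos by (simp add: divide_simps)
    then show ?thesis using drift[of s] dNz t(1) by (simp add: add_divide_distrib)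
  qed
  have part1: "\<forall>i\<in>{N..N + g N}. \<forall>j\<in>{N..N + g N}. dist (xs i) (xs j) \<le> 1 / (real k + 1)"
  proof (intro ballI)
    fix a b assume a: "a \<in> {N..N + g N}" and b: "b \<in> {N..N + g N}"
    have "dist (xs a) (xs b) \<le> dist (xs a) z + dist (xs b) z" using dist_triangle[of "xs a" "xs b" z] by (simp add: dist_commute)
    also have "\<dots> \<le> 4 / (4 * real k + 4)" using win[OF a] win[OF b] by simp
    also have "\<dots> = 1 / (real k + 1)" by (simp add: divide_simps)
    finally show "dist (xs a) (xs b) \<le> 1 / (real k + 1)" .
  qed
  have part2: "\<forall>m\<ge>N. dist (xs m) (T (xs m)) \<le> 1 / (real k + 1)"
  proof (intro allI impI)
    fix m assume "N \<le> m"
    then have "K \<le> m" unfolding N_def by simp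
    then have "real K \<le> real m" by simp
    moreover have "real K = real c * (real k + 1)\<^sup>2" unfolding Kdef by simp
    ultimately have "real c * (real k + 1)\<^sup>2 \<le> real m" by simp
    then have "dd m \<le> 1 / (real k + 1)" by (intro rate) auto
    then show "dist (xs m) (T (xs m)) \<le> 1 / (real k + 1)" unfolding dd_def xsS .
  qed
  have "N \<le> ?Th (maxf \<gamma> (4 * k + 3)) + K"
    unfolding N_def using ij maxf_ge[of \<gamma> "4 * k + 3"] by (simp add: Theta0_mono)
  then show ?thesis using part1 part2 unfolding xs_def by blast
qed


theorem corollary7p9:
  fixes X C :: "'a::metric_space set" and \<gamma> g :: "nat \<Rightarrow> nat" and b lam :: real
    and T :: "'a \<Rightarrow> 'a" and x :: 'a and k :: nat
  assumes "CAT0 X" and "C \<subseteq> X"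
    and "totally_bounded C" and "II_modulus C \<gamma>"
    and "b > 0" and "\<forall>u\<in>C. \<forall>v\<in>C. dist u v \<le> b"
    and "0 < lam" and "lam < 1"
    and "T ` C \<subseteq> C" and "firmly_nonexp X lam C T"
    and "\<exists>p\<in>C. T p = p"
    and "x \<in> C"
  shows "let c = nat \<lceil>8 * (b + 1)\<^sup>2 / (lam * (1 - lam))\<rceil>;
             K = c * (k + 1)\<^sup>2;
             xs = (\<lambda>n. (T ^^ n) x)
         in \<exists>N \<le> Theta0 c K g k (maxf \<gamma> (4 * k + 3)) + K.
              (\<forall>i\<in>{N..N + g N}. \<forall>j\<in>{N..N + g N}. dist (xs i) (xs j) \<le> 1 / (real k + 1)) \<and>
              (\<forall>m\<ge>N. dist (xs m) (T (xs m)) \<le> 1 / (real k + 1))"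
  unfolding Let_def
  using main[OF assms(1,2,4,5,6,7,8,9,10,11,12) real_nat_ceiling_ge refl, where g=g and k=k] by simp

end
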